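(* There is an absolute constant $c>0$ such that every ordered tree $T$ with maximum degree $d\ge 1$ has a 3D arc diagram drawing with base plane $\mathcal{P}_1=\{z=0\}$ whose perpendicular projection onto $\mathcal{P}_1$ is a straight-line drawing of $T$ (each arc projecting onto the segment joining its endpoints) and whose angular resolution is at least $c/\sqrt{d}$.
   Context: An ordered tree is a tree together with a prescribed cyclic ordering of the edges around each vertex. A 3D arc diagram drawing of $T$ with base plane $\mathcal{P}_1=\{z=0\}$ is a placement of the vertices at distinct points of $\mathcal{P}_1$, together with, for each edge $e=(a,b)$, a circular arc (a contiguous subset of a circle; a straight segment is allowed as the degenerate case) with endpoints at the positions of $a$ and $b$, such that: the arc lies in the plane $\mathcal{P}_2$ containing the segment $ab$ and perpendicular to $\mathcal{P}_1$; all arcs lie in the closed half-space $z\ge 0$; and the arc forms the same angle $\alpha_e\in[0,\pi/2]$ with the segment $ab$ at both of its endpoints. The angle between two arcs incident to a common vertex $v$ is the angle in $[0,\pi]$ between their tangent rays at $v$ (directed into the arcs). The angular resolution of the drawing is the minimum of this angle over all vertices $v$ and all pairs of distinct edges incident to $v$. *)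

theory Defs
  imports "HOL-Analysis.Analysis"
begin

definition nbrs :: "'a set set \<Rightarrow> 'a \<Rightarrow> 'a set" where
  "nbrs E v = {u. {v, u} \<in> E}"

definition is_tree :: "'a set \<Rightarrow> 'a set set \<Rightarrow> bool" where
  "is_tree V E \<longleftrightarrow> finite V \<and> V \<noteq> {} \<and>
     (\<forall>e\<in>E. \<exists>u v. e = {u, v} \<and> u \<noteq> v \<and> u \<in> V \<and> v \<in> V) \<and>
     (\<forall>u\<in>V. \<forall>v\<in>V. (u, v) \<in> {(x, y). {x, y} \<in> E}\<^sup>*) \<and>
     card E = card V - 1"

definition is_rotation_system :: "'a set \<Rightarrow> 'a set set \<Rightarrow> ('a \<Rightarrow> 'a \<Rightarrow> 'a) \<Rightarrow> bool" where
  "is_rotation_system V E \<sigma> \<longleftrightarrow>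
     (\<forall>v\<in>V. bij_betw (\<sigma> v) (nbrs E v) (nbrs E v) \<and>
        (\<forall>u\<in>nbrs E v. \<forall>w\<in>nbrs E v. \<exists>k. (\<sigma> v ^^ k) u = w))"

definition ordered_tree :: "'a set \<Rightarrow> 'a set set \<Rightarrow> ('a \<Rightarrow> 'a \<Rightarrow> 'a) \<Rightarrow> bool" where
  "ordered_tree V E \<sigma> \<longleftrightarrow> is_tree V E \<and> is_rotation_system V E \<sigma>"

definition max_degree :: "'a set \<Rightarrow> 'a set set \<Rightarrow> nat" where
  "max_degree V E = Max ((\<lambda>v. card (nbrs E v)) ` V)"

text \<open>Planar straight-line drawing of an ordered tree in the base plane (identified with the
  complex plane): distinct vertex positions, segments of distinct edges meet only in common
  endpoints, no vertex lies on a non-incident edge, and around each vertex the neighbours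
  appear in counterclockwise order according to the rotation system.\<close>
definition straight_line_drawing ::
  "'a set \<Rightarrow> 'a set set \<Rightarrow> ('a \<Rightarrow> 'a \<Rightarrow> 'a) \<Rightarrow> ('a \<Rightarrow> complex) \<Rightarrow> bool" where
  "straight_line_drawing V E \<sigma> p \<longleftrightarrow>
     inj_on p V \<and>
     (\<forall>e\<in>E. \<forall>w\<in>V. w \<notin> e \<longrightarrow> p w \<notin> convex hull (p ` e)) \<and>
     (\<forall>e\<in>E. \<forall>f\<in>E. e \<noteq> f \<longrightarrow> convex hull (p ` e) \<inter> convex hull (p ` f) \<subseteq> p ` (e \<inter> f)) \<and>
     (\<forall>v\<in>V. \<forall>u\<in>nbrs E v. \<forall>x\<in>nbrs E v. x \<noteq> u \<longrightarrow>
        Arg2pi ((p (\<sigma> v u) - p v) / (p u - p v)) \<le> Arg2pi ((p x - p v) / (p u - p v)))"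

text \<open>3D arc diagram with base plane z = 0: vertex v sits at (Re (p v), Im (p v), 0); edge
  e = {a,b} is drawn as the circular arc in the vertical plane through a b, lying in z \<ge> 0,
  making angle alpha e in [0, pi/2] with the segment ab at both endpoints. Its tangent ray at
  the endpoint v (towards the other endpoint u) is given below.\<close>
definition arc_tangent :: "('a \<Rightarrow> complex) \<Rightarrow> real \<Rightarrow> 'a \<Rightarrow> 'a \<Rightarrow> real^3" where
  "arc_tangent p a v u =
     (let h = (p u - p v) / of_real (cmod (p u - p v))
      in vector [cos a * Re h, cos a * Im h, sin a])"

definition vec_angle :: "real^3 \<Rightarrow> real^3 \<Rightarrow> real" where
  "vec_angle x y = arccos ((x \<bullet> y) / (norm x * norm y))"

definition arc_diagram_drawing ::
  "'a set \<Rightarrow> 'a set set \<Rightarrow> ('a \<Rightarrow> complex) \<Rightarrow> ('a set \<Rightarrow> real) \<Rightarrow> bool" where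
  "arc_diagram_drawing V E p \<alpha> \<longleftrightarrow> inj_on p V \<and> (\<forall>e\<in>E. 0 \<le> \<alpha> e \<and> \<alpha> e \<le> pi / 2)"

definition angular_resolution_ge ::
  "'a set \<Rightarrow> 'a set set \<Rightarrow> ('a \<Rightarrow> complex) \<Rightarrow> ('a set \<Rightarrow> real) \<Rightarrow> real \<Rightarrow> bool" where
  "angular_resolution_ge V E p \<alpha> r \<longleftrightarrow>
     (\<forall>v\<in>V. \<forall>u\<in>nbrs E v. \<forall>w\<in>nbrs E v. u \<noteq> w \<longrightarrow>
        r \<le> vec_angle (arc_tangent p (\<alpha> {v, u}) v u) (arc_tangent p (\<alpha> {v, w}) v w))"

end

theory Submission
  imports Defs
begin


lemma sepD:
  fixes l t \<delta> \<phi> :: real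
  assumes "0 \<le> l" "0 \<le> \<delta>" "\<delta> \<le> \<bar>\<phi>\<bar>" "\<bar>\<phi>\<bar> \<le> pi/2"
  shows "l * sin \<delta> \<le> cmod (of_real l * cis \<phi> - of_real t)"
proof -
  have "sin \<delta> \<le> sin \<bar>\<phi>\<bar>"
    using assms by (intro sin_monotone_2pi_le) auto
  also have "sin \<bar>\<phi>\<bar> = \<bar>sin \<phi>\<bar>"
  proof (cases "\<phi> \<ge> 0")
    case True thus ?thesis using assms(4) by (simp add: sin_ge_zero)
  next
    case False
    hence "sin (-\<phi>) \<ge> 0" using assms(4) by (intro sin_ge_zero) auto
    thus ?thesis using False by simp
  qed
  finally have "l * sin \<delta> \<le> l * \<bar>sin \<phi>\<bar>" using assms(1) by (simp add: mult_left_mono)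
  also have "\<dots> = \<bar>Im (of_real l * cis \<phi> - of_real t)\<bar>" using assms(1) by (simp add: abs_mult)
  also have "\<dots> \<le> cmod (of_real l * cis \<phi> - of_real t)" by (rule abs_Im_le_cmod)
  finally show ?thesis .
qed

lemma sepD2:
  fixes l t \<delta> a b :: real
  assumes "0 \<le> l" "0 \<le> \<delta>" "\<delta> \<le> \<bar>a - b\<bar>" "\<bar>a - b\<bar> \<le> pi/2"
  shows "l * sin \<delta> \<le> cmod (of_real l * cis a - of_real t * cis b)"
proof -
  have "of_real l * cis a - of_real t * cis b = (of_real l * cis (a - b) - of_real t) * cis b"
    by (simp add: algebra_simps cis_mult)
  hence "cmod (of_real l * cis a - of_real t * cis b) = cmod (of_real l * cis (a - b) - of_real t)"
    by (simp add: norm_mult)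
  thus ?thesis using sepD[OF assms] by simp
qed

definition tvec :: "real \<Rightarrow> real \<Rightarrow> real^3" where
  "tvec a \<theta> = vector [cos a * cos \<theta>, cos a * sin \<theta>, sin a]"

lemma tvec_inner: "tvec a1 t1 \<bullet> tvec a2 t2 = cos a1 * cos a2 * cos (t1 - t2) + sin a1 * sin a2"
  unfolding tvec_def inner_vec_def sum_3 by (simp add: cos_diff algebra_simps)

lemma tvec_norm: "norm (tvec a t) = 1"
proof -
  have "tvec a t \<bullet> tvec a t = 1"
    unfolding tvec_inner by (simp add: power2_eq_square[symmetric])
  thus ?thesis by (simp add: norm_eq_sqrt_inner)
qed



lemma funpow_in: assumes "bij_betw f A A" "a \<in> A" shows "(f^^j) a \<in> A"
  using assms by (induction j) (auto simp: bij_betw_def)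

lemma orbit_cancel:
  assumes "bij_betw f A A" "a \<in> A" "i \<le> j" "(f^^i) a = (f^^j) a"
  shows "(f^^(j - i)) a = a"
proof -
  have inj: "inj_on (f^^i) A" using bij_betw_funpow[OF assms(1)] bij_betw_def by blast
  have "(f^^(i + (j-i))) a = (f^^i) ((f^^(j-i)) a)" by (simp only: funpow_add comp_apply)
  hence "(f^^j) a = (f^^i) ((f^^(j-i)) a)" using assms(3) by simp
  hence "(f^^i) ((f^^(j-i)) a) = (f^^i) a" using assms(4) by simp
  thus ?thesis using inj funpow_in[OF assms(1,2)] assms(2) by (auto dest: inj_onD)
qed

lemma orbit_period:
  assumes "(f^^m) a = a" shows "(f^^j) a = (f^^(j mod m)) a"
proof -
  have "(f^^(m * q + t)) a = (f^^t) a" for q t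
  proof (induction q)
    case 0 then show ?case by simp
  next
    case (Suc q)
    have "(f^^((m * q + t) + m)) a = (f^^(m * q + t)) ((f^^m) a)"
      by (simp only: funpow_add comp_apply)
    moreover have "(f^^(m * Suc q + t)) a = (f^^((m * q + t) + m)) a" by (simp add: algebra_simps)
    ultimately have "(f^^(m * Suc q + t)) a = (f^^(m * q + t)) ((f^^m) a)" by simp
    then show ?case using Suc assms by simp
  qed
  from this[of "j div m" "j mod m"] show ?thesis by simp
qed

lemma orbit_main:
  assumes fin: "finite A" and bij: "bij_betw f A A" and aA: "a \<in> A"
    and orb: "\<forall>u\<in>A. \<exists>j. (f^^j) a = u"
  shows "(f^^(card A)) a = a" and "\<And>i j. i < card A \<Longrightarrow> j < card A \<Longrightarrow> (f^^i) a = (f^^j) a \<Longrightarrow> i = j"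
proof -
  let ?g = "\<lambda>j. (f^^j) a"
  let ?n = "card A"
  have gA: "?g ` {0..?n} \<subseteq> A" using funpow_in[OF bij aA] by auto
  have "\<not> inj_on ?g {0..?n}"
  proof
    assume "inj_on ?g {0..?n}"
    hence "card (?g ` {0..?n}) = Suc ?n" by (simp add: card_image)
    moreover have "card (?g ` {0..?n}) \<le> ?n" using card_mono[OF fin gA] .
    ultimately show False by simp
  qed
  then obtain i j where ij: "i \<in> {0..?n}" "j \<in> {0..?n}" "i \<noteq> j" "?g i = ?g j"
    unfolding inj_on_def by blast
  have "\<exists>m. 0 < m \<and> m \<le> ?n \<and> ?g m = a"
  proof (cases "i < j")
    case True
    thus ?thesis using orbit_cancel[OF bij aA, of i j] ij by (intro exI[of _ "j - i"]) auto
  next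
    case False
    thus ?thesis using orbit_cancel[OF bij aA, of j i] ij by (intro exI[of _ "i - j"]) auto
  qed
  define m where "m = (LEAST m. 0 < m \<and> ?g m = a)"
  have mex: "\<exists>m. 0 < m \<and> ?g m = a" using \<open>\<exists>m. 0 < m \<and> m \<le> ?n \<and> ?g m = a\<close> by blast
  have m1: "0 < m \<and> ?g m = a" unfolding m_def by (rule LeastI_ex[OF mex])
  have mle: "m \<le> ?n"
  proof -
    obtain m' where m': "0 < m'" "m' \<le> ?n" "?g m' = a" using \<open>\<exists>m. 0 < m \<and> m \<le> ?n \<and> ?g m = a\<close> by blast
    have "m \<le> m'" unfolding m_def using m' by (intro Least_le) simp
    thus ?thesis using m' by simp
  qed
  have "A \<subseteq> ?g ` {..<m}"
  proof
    fix u assume "u \<in> A"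
    then obtain j where "?g j = u" using bspec[OF orb] by blast
    have "?g (j mod m) = ?g j" by (rule orbit_period[OF m1[THEN conjunct2], symmetric])
    hence "?g (j mod m) = u" using \<open>?g j = u\<close> by (rule trans)
    moreover have "j mod m < m" using m1 by simp
    ultimately show "u \<in> ?g ` {..<m}" by blast
  qed
  hence "?n \<le> card (?g ` {..<m})" by (intro card_mono) simp_all
  also have "\<dots> \<le> card {..<m}" by (rule card_image_le) simp
  finally have "?n \<le> m" by simp
  hence mn: "m = ?n" using mle by simp
  show "?g ?n = a" using m1 mn by simp
  show "i = j" if "i < ?n" "j < ?n" "?g i = ?g j" for i j
  proof (rule ccontr)
    assume "i \<noteq> j"
    then consider "i < j" | "j < i" by linarith
    thus False
    proof cases
      case 1
      hence "?g (j - i) = a" using orbit_cancel[OF bij aA _ that(3)] by simp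
      hence "m \<le> j - i" unfolding m_def using 1 by (intro Least_le) simp
      thus False using that mn by simp
    next
      case 2
      hence "?g (i - j) = a" using orbit_cancel[OF bij aA _ that(3)[symmetric]] by simp
      hence "m \<le> i - j" unfolding m_def using 2 by (intro Least_le) simp
      thus False using that mn by simp
    qed
  qed
qed

definition slot_of :: "('a \<Rightarrow> 'a) \<Rightarrow> 'a \<Rightarrow> 'a \<Rightarrow> nat" where
  "slot_of f a u = (LEAST j. (f^^j) a = u)"

lemma slot_props:
  assumes fin: "finite A" and bij: "bij_betw f A A" and aA: "a \<in> A"
    and orb: "\<forall>u\<in>A. \<exists>j. (f^^j) a = u"
  shows "\<And>u. u \<in> A \<Longrightarrow> slot_of f a u < card A \<and> (f^^(slot_of f a u)) a = u"
    and "\<And>j. j < card A \<Longrightarrow> slot_of f a ((f^^j) a) = j"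
    and "\<And>u. u \<in> A \<Longrightarrow> slot_of f a (f u) = (slot_of f a u + 1) mod card A"
    and "slot_of f a a = 0"
proof -
  note om = orbit_main[OF assms]
  have cpos: "0 < card A" using aA fin by (simp add: card_gt_0_iff) blast
  show sp: "slot_of f a u < card A \<and> (f^^(slot_of f a u)) a = u" if uA: "u \<in> A" for u
  proof -
    obtain j where j: "(f^^j) a = u" using bspec[OF orb uA] by (erule exE)
    have "(f^^(j mod card A)) a = (f^^j) a" by (rule orbit_period[OF om(1), symmetric])
    hence "(f^^(j mod card A)) a = u" using j by (rule trans)
    hence "slot_of f a u \<le> j mod card A" unfolding slot_of_def by (rule Least_le[of "\<lambda>j. (f^^j) a = u"])
    moreover have "j mod card A < card A" using cpos by simp
    moreover have "(f^^(slot_of f a u)) a = u" unfolding slot_of_def using LeastI[of "\<lambda>j. (f^^j) a = u", OF j] .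
    ultimately show ?thesis by simp
  qed
  show sj: "slot_of f a ((f^^j) a) = j" if "j < card A" for j
  proof -
    have "(f^^j) a \<in> A" by (rule funpow_in[OF bij aA])
    from sp[OF this] have "slot_of f a ((f^^j) a) < card A" "(f^^(slot_of f a ((f^^j) a))) a = (f^^j) a" by auto
    from om(2)[OF this(1) that this(2)] show ?thesis .
  qed
  show "slot_of f a (f u) = (slot_of f a u + 1) mod card A" if "u \<in> A" for u
  proof -
    let ?s = "slot_of f a u"
    have "f u = (f^^(Suc ?s)) a" using sp[OF that] by simp
    also have "\<dots> = (f^^((?s + 1) mod card A)) a" using orbit_period[OF om(1)] by (metis Suc_eq_plus1)
    finally show ?thesis using sj[of "(?s + 1) mod card A"] cpos by simp
  qed
  show "slot_of f a a = 0" unfolding slot_of_def by (rule Least_eq_0) simp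
qed



locale otree =
  fixes V :: "nat set" and E :: "nat set set" and \<sigma> :: "nat \<Rightarrow> nat \<Rightarrow> nat" and r :: nat and k :: nat
  assumes ot: "ordered_tree V E \<sigma>" and rV: "r \<in> V" and k1: "1 \<le> k"
    and degk: "\<forall>v\<in>V. card (nbrs E v) \<le> k^2"
begin

definition "Rel = {(x,y). {x,y} \<in> E}"
definition "dep v = (LEAST n. (r,v) \<in> Rel^^n)"
definition "par v = (SOME u. (r,u) \<in> Rel^^(dep v - 1) \<and> {u,v} \<in> E)"

lemma tree: "is_tree V E" and rot: "is_rotation_system V E \<sigma>"
  using ot unfolding ordered_tree_def by simp_all

lemma finV: "finite V" and Vne: "V \<noteq> {}"
  and Eform: "\<forall>e\<in>E. \<exists>u v. e = {u, v} \<and> u \<noteq> v \<and> u \<in> V \<and> v \<in> V"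
  and connV: "\<forall>u\<in>V. \<forall>v\<in>V. (u, v) \<in> {(x, y). {x, y} \<in> E}\<^sup>*"
  and cardE: "card E = card V - 1"
proof -
  note h = tree[unfolded is_tree_def]
  show "finite V" using h by (rule conjunct1)
  show "V \<noteq> {}" using h[THEN conjunct2] by (rule conjunct1)
  show "\<forall>e\<in>E. \<exists>u v. e = {u, v} \<and> u \<noteq> v \<and> u \<in> V \<and> v \<in> V" using h[THEN conjunct2, THEN conjunct2] by (rule conjunct1)
  show "\<forall>u\<in>V. \<forall>v\<in>V. (u, v) \<in> {(x, y). {x, y} \<in> E}\<^sup>*" using h[THEN conjunct2, THEN conjunct2, THEN conjunct2] by (rule conjunct1)
  show "card E = card V - 1" using h[THEN conjunct2, THEN conjunct2, THEN conjunct2] by (rule conjunct2)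
qed

lemma edgeV: assumes "{u,v} \<in> E" shows "u \<in> V" "v \<in> V" "u \<noteq> v"
proof -
  obtain a b where ab: "{u,v} = {a,b}" "a \<noteq> b" "a \<in> V" "b \<in> V"
    using Eform assms by metis
  hence "(u = a \<and> v = b) \<or> (u = b \<and> v = a)" by (simp add: doubleton_eq_iff)
  thus "u \<in> V" "v \<in> V" "u \<noteq> v" using ab by auto
qed

lemma finE: "finite E"
proof -
  have "E \<subseteq> Pow V"
  proof
    fix e assume "e \<in> E"
    then obtain u v where "e = {u,v}" "u \<in> V" "v \<in> V" using Eform by metis
    thus "e \<in> Pow V" by simp
  qed
  thus ?thesis using finV finite_subset by blast
qed

lemma conn: assumes "v \<in> V" shows "\<exists>n. (r,v) \<in> Rel^^n"
proof -
  from connV have "(r,v) \<in> Rel\<^sup>*" using assms rV unfolding Rel_def by simp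
  thus ?thesis by (simp add: rtrancl_power)
qed

lemma dep_path: assumes "v \<in> V" shows "(r,v) \<in> Rel^^(dep v)"
  unfolding dep_def using conn[OF assms] by (rule LeastI_ex)

lemma dep_r: "dep r = 0"
  unfolding dep_def by (rule Least_eq_0) simp

lemma dep0: assumes "v \<in> V" "dep v = 0" shows "v = r"
  using dep_path[OF assms(1)] assms(2) by simp

lemma par_props: assumes "v \<in> V" "v \<noteq> r"
  shows "par v \<in> V" "{par v, v} \<in> E" "dep v = Suc (dep (par v))"
proof -
  have "dep v \<noteq> 0" using dep0 assms by blast
  then obtain m where m: "dep v = Suc m" by (cases "dep v") auto
  have "(r,v) \<in> Rel^^m O Rel" using dep_path[OF assms(1)] m by simp
  then obtain u where u: "(r,u) \<in> Rel^^m" "(u,v) \<in> Rel" by blast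
  have ex: "\<exists>u. (r,u) \<in> Rel^^(dep v - 1) \<and> {u,v} \<in> E" using u m unfolding Rel_def by auto
  have P: "(r,par v) \<in> Rel^^(dep v - 1) \<and> {par v,v} \<in> E"
    unfolding par_def by (rule someI_ex[OF ex])
  thus "{par v, v} \<in> E" by blast
  thus pV: "par v \<in> V" using edgeV by blast
  have "dep (par v) \<le> m" using P m unfolding dep_def by (auto intro: Least_le)
  moreover have "m \<le> dep (par v)"
  proof (rule ccontr)
    assume "\<not> m \<le> dep (par v)"
    hence lt: "Suc (dep (par v)) < dep v" using m by simp
    have "{par v, v} = {v, par v}" by blast
    hence "(par v, v) \<in> Rel" using P unfolding Rel_def by simp
    hence "(r, v) \<in> Rel^^(dep (par v)) O Rel"
      using dep_path[OF pV] by blast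
    hence "(r,v) \<in> Rel^^(Suc (dep (par v)))" by simp
    hence "dep v \<le> Suc (dep (par v))" unfolding dep_def by (rule Least_le)
    thus False using lt by simp
  qed
  ultimately show "dep v = Suc (dep (par v))" using m by simp
qed

lemma par_inj: assumes "a \<in> V" "a \<noteq> r" "b \<in> V" "b \<noteq> r" "{par a, a} = {par b, b}"
  shows "a = b"
proof (rule ccontr)
  assume "a \<noteq> b"
  hence "par a = b" "par b = a" using assms(5) by (auto simp: doubleton_eq_iff)
  thus False using par_props(3)[OF assms(1,2)] par_props(3)[OF assms(3,4)] by simp
qed

definition "Tr = (\<lambda>a. {par a, a}) ` (V - {r})"

lemma E_eq: "E = Tr"
proof -
  have sub: "Tr \<subseteq> E" unfolding Tr_def using par_props(2) by blast
  have "inj_on (\<lambda>a. {par a, a}) (V - {r})" using par_inj by (auto simp: inj_on_def)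
  hence "card Tr = card (V - {r})" unfolding Tr_def by (rule card_image)
  also have "\<dots> = card E" using cardE rV finV by simp
  finally show ?thesis using card_subset_eq[OF finE sub] by simp
qed

lemma edge_cases: assumes "{x,y} \<in> E"
  shows "(x \<in> V \<and> x \<noteq> r \<and> par x = y) \<or> (y \<in> V \<and> y \<noteq> r \<and> par y = x)"
proof -
  have "{x,y} \<in> Tr" using assms E_eq by simp
  then obtain a where a: "a \<in> V" "a \<noteq> r" "{x,y} = {par a, a}" unfolding Tr_def by auto
  hence "(x = par a \<and> y = a) \<or> (x = a \<and> y = par a)" by (simp add: doubleton_eq_iff)
  thus ?thesis using a(1,2) by metis
qed

lemma nbrs_iff: assumes "v \<in> V"
  shows "u \<in> nbrs E v \<longleftrightarrow> (v \<noteq> r \<and> u = par v) \<or> (u \<in> V \<and> u \<noteq> r \<and> par u = v)"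
proof
  assume "u \<in> nbrs E v"
  hence vu: "{v,u} \<in> E" unfolding nbrs_def by simp
  show "(v \<noteq> r \<and> u = par v) \<or> (u \<in> V \<and> u \<noteq> r \<and> par u = v)" using edge_cases[OF vu] by metis
next
  assume "(v \<noteq> r \<and> u = par v) \<or> (u \<in> V \<and> u \<noteq> r \<and> par u = v)"
  thus "u \<in> nbrs E v"
  proof
    assume h: "v \<noteq> r \<and> u = par v"
    have "{par v, v} \<in> E" using par_props(2)[OF assms] h by blast
    moreover have "{par v, v} = {v, par v}" by blast
    ultimately show ?thesis unfolding nbrs_def using h by simp
  next
    assume h: "u \<in> V \<and> u \<noteq> r \<and> par u = v"
    have "{par u, u} \<in> E" using par_props(2)[of u] h by blast
    hence "{v, u} \<in> E" using h by simp
    thus ?thesis unfolding nbrs_def by simp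
  qed
qed

lemma nbrs_V: assumes "v \<in> V" shows "nbrs E v \<subseteq> V"
proof
  fix u assume "u \<in> nbrs E v"
  hence "{v,u} \<in> E" unfolding nbrs_def by simp
  thus "u \<in> V" by (rule edgeV(2))
qed

lemma fin_nbrs: assumes "v \<in> V" shows "finite (nbrs E v)"
  using nbrs_V[OF assms] finV finite_subset by blast

end


context otree begin

definition "ref v = (if v = r then (SOME u. u \<in> nbrs E v) else par v)"
definition "slot v u = slot_of (\<sigma> v) (ref v) u"
definition "deg v = card (nbrs E v)"

lemma slot_base: assumes "v \<in> V" "u0 \<in> nbrs E v"
  shows "finite (nbrs E v)" "bij_betw (\<sigma> v) (nbrs E v) (nbrs E v)" "ref v \<in> nbrs E v"
    "\<forall>u\<in>nbrs E v. \<exists>j. (\<sigma> v^^j) (ref v) = u"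
proof -
  show "finite (nbrs E v)" using fin_nbrs[OF assms(1)] .
  have R: "bij_betw (\<sigma> v) (nbrs E v) (nbrs E v) \<and>
        (\<forall>u\<in>nbrs E v. \<forall>w\<in>nbrs E v. \<exists>k. (\<sigma> v ^^ k) u = w)"
    using rot assms(1) unfolding is_rotation_system_def by blast
  thus "bij_betw (\<sigma> v) (nbrs E v) (nbrs E v)" by blast
  show rf: "ref v \<in> nbrs E v"
  proof (cases "v = r")
    case True
    thus ?thesis unfolding ref_def using assms(2) by (simp add: some_in_eq) blast
  next
    case False
    thus ?thesis unfolding ref_def using nbrs_iff[OF assms(1)] by simp
  qed
  show "\<forall>u\<in>nbrs E v. \<exists>j. (\<sigma> v^^j) (ref v) = u" using R rf by blast
qed

lemma slot_lt: assumes "v \<in> V" "u \<in> nbrs E v" shows "slot v u < deg v"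
  using slot_props(1)[OF slot_base[OF assms] assms(2)] unfolding slot_def deg_def by blast

lemma slot_pow: assumes "v \<in> V" "u \<in> nbrs E v" shows "(\<sigma> v ^^ slot v u) (ref v) = u"
  using slot_props(1)[OF slot_base[OF assms] assms(2)] unfolding slot_def deg_def by blast

lemma slot_inj: assumes "v \<in> V" "u \<in> nbrs E v" "w \<in> nbrs E v" "slot v u = slot v w"
  shows "u = w"
  using slot_pow[OF assms(1,2)] slot_pow[OF assms(1,3)] assms(4) by metis

lemma slot_succ: assumes "v \<in> V" "u \<in> nbrs E v"
  shows "slot v (\<sigma> v u) = (slot v u + 1) mod deg v"
  using slot_props(3)[OF slot_base[OF assms] assms(2)] unfolding slot_def deg_def .

lemma sigma_in: assumes "v \<in> V" "u \<in> nbrs E v" shows "\<sigma> v u \<in> nbrs E v"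
  using slot_base(2)[OF assms] assms(2) unfolding bij_betw_def by blast

lemma slot_par: assumes "v \<in> V" "v \<noteq> r" shows "slot v (par v) = 0"
proof -
  have "par v \<in> nbrs E v" using nbrs_iff[OF assms(1)] assms(2) by simp
  from slot_props(4)[OF slot_base[OF assms(1) this]] show ?thesis
    unfolding slot_def using assms(2) by (simp add: ref_def)
qed

lemma deg_le: assumes "v \<in> V" shows "deg v \<le> k^2"
  using degk assms unfolding deg_def by blast

definition "N = 4 * k^2"
definition "\<rho> = sin (2 * pi / real N) / 4"

lemma N_ge: "4 \<le> N" using k1 unfolding N_def by simp

lemma sinN: "0 < sin (2 * pi / real N)" "sin (2 * pi / real N) \<le> 1"
proof -
  have "0 < 2 * pi / real N" using N_ge by simp
  moreover have "2 * pi / real N < pi"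
    using N_ge by (simp add: divide_less_eq pi_gt_zero)
  ultimately show "0 < sin (2 * pi / real N)" by (rule sin_gt_zero)
  show "sin (2 * pi / real N) \<le> 1" by simp
qed

lemma rho_pos: "0 < \<rho>" and rho_le: "\<rho> \<le> 1/4"
  using sinN unfolding \<rho>_def by auto

fun P :: "nat \<Rightarrow> nat \<Rightarrow> complex \<times> real \<times> nat" where
  "P 0 v = (0, 0, 0)"
| "P (Suc n) v = (let u = par v; X = P n u; s = slot u v;
      \<phi> = fst (snd X) + 2 * pi * real s / real N
    in (fst X + of_real (\<rho> ^ Suc n) * cis \<phi>, \<phi> + pi, (snd (snd X) + s) mod k))"

definition "pos v = fst (P (dep v) v)"
definition "bet v = fst (snd (P (dep v) v))"
definition "lev v = snd (snd (P (dep v) v))"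
definition "th v u = bet v + 2 * pi * real (slot v u) / real N"

lemma root_vals: "pos r = 0" "bet r = 0" "lev r = 0"
  unfolding pos_def bet_def lev_def dep_r by simp_all

lemma child_vals: assumes "u \<in> V" "u \<noteq> r"
  shows "pos u = pos (par u) + of_real (\<rho> ^ dep u) * cis (th (par u) u)"
    "bet u = th (par u) u + pi"
    "lev u = (lev (par u) + slot (par u) u) mod k"
proof -
  have d: "dep u = Suc (dep (par u))" using par_props(3)[OF assms] .
  show "pos u = pos (par u) + of_real (\<rho> ^ dep u) * cis (th (par u) u)"
    unfolding pos_def th_def bet_def d by (simp add: Let_def)
  show "bet u = th (par u) u + pi"
    unfolding th_def bet_def d by (simp add: Let_def)
  show "lev u = (lev (par u) + slot (par u) u) mod k"
    unfolding lev_def d by (simp add: Let_def)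
qed

lemma lev_lt: "lev v < k"
proof (cases "dep v")
  case 0 thus ?thesis using k1 unfolding lev_def by simp
next
  case (Suc n) thus ?thesis using k1 unfolding lev_def by (simp add: Let_def)
qed

lemma cis_plus_pi: "cis (a + pi) = - cis a"
  by (simp add: cis_mult[symmetric])

definition "len v u = (if u \<in> V \<and> u \<noteq> r \<and> par u = v then \<rho> ^ Suc (dep v) else \<rho> ^ dep v)"

lemma len_pos: "0 < len v u" unfolding len_def using rho_pos by simp

lemma nb_rep: assumes "v \<in> V" "u \<in> nbrs E v"
  shows "pos u = pos v + of_real (len v u) * cis (th v u)"
proof -
  consider "v \<noteq> r" "u = par v" | "u \<in> V" "u \<noteq> r" "par u = v" using nbrs_iff[OF assms(1)] assms(2) by blast
  thus ?thesis
  proof cases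
    case 1
    have nc: "\<not> (u \<in> V \<and> u \<noteq> r \<and> par u = v)"
    proof
      assume "u \<in> V \<and> u \<noteq> r \<and> par u = v"
      hence "dep u = Suc (dep v)" using par_props(3) by metis
      moreover have "dep v = Suc (dep u)" using par_props(3)[OF assms(1) 1(1)] 1(2) by simp
      ultimately show False by simp
    qed
    have "th v u = bet v" unfolding th_def using slot_par[OF assms(1) 1(1)] 1(2) by simp
    also have "\<dots> = th u v + pi" using child_vals(2)[OF assms(1) 1(1)] 1(2) by simp
    finally have "cis (th v u) = - cis (th u v)" by (simp add: cis_plus_pi)
    moreover have "pos v = pos u + of_real (\<rho> ^ dep v) * cis (th u v)"
      using child_vals(1)[OF assms(1) 1(1)] 1(2) by simp
    moreover have "len v u = \<rho> ^ dep v" unfolding len_def using nc by presburger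
    ultimately show ?thesis by simp
  next
    case 2
    have "dep u = Suc (dep v)" using par_props(3)[OF 2(1,2)] 2(3) by simp
    thus ?thesis using child_vals(1)[OF 2(1,2)] 2 unfolding len_def by simp
  qed
qed

end


context otree begin

lemma th_diff: assumes "v \<in> V" "u \<in> nbrs E v" "w \<in> nbrs E v" "u \<noteq> w"
  shows "2 * pi / real N \<le> \<bar>th v u - th v w\<bar>" "\<bar>th v u - th v w\<bar> \<le> pi / 2"
proof -
  let ?D = "real (slot v u) - real (slot v w)"
  have Npos: "0 < real N" using N_ge by simp
  have ne: "slot v u \<noteq> slot v w" using slot_inj[OF assms(1-3)] assms(4) by blast
  have D1: "1 \<le> \<bar>?D\<bar>" using ne by linarith
  have "slot v u < k^2" "slot v w < k^2"
    using slot_lt[OF assms(1,2)] slot_lt[OF assms(1,3)] deg_le[OF assms(1)] by linarith+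
  hence D2: "\<bar>?D\<bar> \<le> real (k^2)" by linarith
  have "th v u - th v w = 2 * pi * ?D / real N"
    unfolding th_def using Npos by (simp add: field_simps)
  hence eq: "\<bar>th v u - th v w\<bar> = 2 * pi * \<bar>?D\<bar> / real N"
    using Npos pi_gt_zero by (simp add: abs_mult abs_divide)
  show "2 * pi / real N \<le> \<bar>th v u - th v w\<bar>"
    unfolding eq using D1 Npos by (simp add: divide_right_mono)
  have "2 * pi * \<bar>?D\<bar> / real N \<le> 2 * pi * real (k^2) / real N"
    using D2 Npos by (simp add: divide_right_mono)
  also have "\<dots> = pi / 2" unfolding N_def using k1 by (simp add: field_simps)
  finally show "\<bar>th v u - th v w\<bar> \<le> pi / 2" unfolding eq .
qed

lemma sep_v: assumes "v \<in> V" "u \<in> nbrs E v" "w \<in> nbrs E v" "u \<noteq> w" "0 \<le> l"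
  shows "l * (4 * \<rho>) \<le> cmod (of_real l * cis (th v u) - of_real t * cis (th v w))"
proof -
  have "4 * \<rho> = sin (2 * pi / real N)" unfolding \<rho>_def by simp
  moreover have "l * sin (2 * pi / real N) \<le> cmod (of_real l * cis (th v u) - of_real t * cis (th v w))"
    by (rule sepD2) (use assms(5) N_ge th_diff[OF assms(1-4)] in auto)
  ultimately show ?thesis by simp
qed

lemma seg_pt: assumes "v \<in> V" "w \<in> nbrs E v" "z \<in> closed_segment (pos v) (pos w)"
  shows "\<exists>t. 0 \<le> t \<and> t \<le> len v w \<and> z = pos v + of_real t * cis (th v w)"
proof -
  obtain s where s: "0 \<le> s" "s \<le> 1" "z = (1 - s) *\<^sub>R pos v + s *\<^sub>R pos w"
    using assms(3) unfolding closed_segment_def by blast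
  have "z = pos v + of_real s * (pos w - pos v)" using s(3) by (simp add: scaleR_conv_of_real algebra_simps)
  also have "\<dots> = pos v + of_real (s * len v w) * cis (th v w)"
    using nb_rep[OF assms(1,2)] by simp
  finally show ?thesis using s len_pos[of v w]
    by (intro exI[of _ "s * len v w"]) (auto simp: mult_le_cancel_right1 mult_nonneg_nonneg)
qed

lemma LGa: assumes "v \<in> V" "u \<in> nbrs E v" "w \<in> nbrs E v" "u \<noteq> w"
  shows "closed_segment (pos v) (pos u) \<inter> closed_segment (pos v) (pos w) \<subseteq> {pos v}"
proof
  fix z assume z: "z \<in> closed_segment (pos v) (pos u) \<inter> closed_segment (pos v) (pos w)"
  obtain t1 where t1: "0 \<le> t1" "z = pos v + of_real t1 * cis (th v u)" using seg_pt[OF assms(1,2)] z by blast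
  obtain t2 where t2: "z = pos v + of_real t2 * cis (th v w)" using seg_pt[OF assms(1,3)] z by blast
  have "t1 * (4 * \<rho>) \<le> cmod (of_real t1 * cis (th v u) - of_real t2 * cis (th v w))"
    by (rule sep_v[OF assms t1(1)])
  also have "of_real t1 * cis (th v u) - of_real t2 * cis (th v w) = 0" using t1(2) t2 by simp
  finally have "t1 * (4 * \<rho>) \<le> 0" by simp
  hence "t1 = 0" using t1(1) rho_pos by (simp add: mult_le_0_iff)
  thus "z \<in> {pos v}" using t1(2) by simp
qed

lemma LGb: assumes "v \<in> V" "u \<in> nbrs E v" "w \<in> nbrs E v" "u \<noteq> w" "u \<in> V" "u \<noteq> r" "par u = v"
  shows "ball (pos u) (2 * \<rho> ^ Suc (Suc (dep v))) \<inter> closed_segment (pos v) (pos w) = {}"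
proof (rule ccontr)
  assume "\<not> ?thesis"
  then obtain z where z: "z \<in> ball (pos u) (2 * \<rho> ^ Suc (Suc (dep v)))" "z \<in> closed_segment (pos v) (pos w)" by blast
  obtain t where t: "z = pos v + of_real t * cis (th v w)" using seg_pt[OF assms(1,3) z(2)] by blast
  have lu: "len v u = \<rho> ^ Suc (dep v)" unfolding len_def using assms(5-7) by simp
  have "\<rho> ^ Suc (dep v) * (4 * \<rho>) \<le> cmod (of_real (\<rho> ^ Suc (dep v)) * cis (th v u) - of_real t * cis (th v w))"
    by (rule sep_v[OF assms(1-4)]) (use rho_pos in simp)
  also have "of_real (\<rho> ^ Suc (dep v)) * cis (th v u) - of_real t * cis (th v w) = pos u - z"
    using nb_rep[OF assms(1,2)] lu t by simp
  also have "cmod (pos u - z) < 2 * \<rho> ^ Suc (Suc (dep v))" using z(1) by (simp add: dist_norm)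
  finally have "4 * \<rho> ^ Suc (Suc (dep v)) < 2 * \<rho> ^ Suc (Suc (dep v))" by (simp add: algebra_simps)
  thus False using rho_pos by simp
qed

lemma LGc: assumes "v \<in> V" "u \<in> nbrs E v" "w \<in> nbrs E v" "u \<noteq> w" "u \<in> V" "u \<noteq> r" "par u = v"
   "w \<in> V" "w \<noteq> r" "par w = v"
  shows "ball (pos u) (2 * \<rho> ^ Suc (Suc (dep v))) \<inter> ball (pos w) (2 * \<rho> ^ Suc (Suc (dep v))) = {}"
proof (rule ccontr)
  let ?R = "2 * \<rho> ^ Suc (Suc (dep v))"
  assume "\<not> ?thesis"
  then obtain z where z: "z \<in> ball (pos u) ?R" "z \<in> ball (pos w) ?R" by blast
  have lu: "len v u = \<rho> ^ Suc (dep v)" unfolding len_def using assms(5-7) by simp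
  have lw: "len v w = \<rho> ^ Suc (dep v)" unfolding len_def using assms(8-10) by simp
  have "\<rho> ^ Suc (dep v) * (4 * \<rho>) \<le> cmod (of_real (\<rho> ^ Suc (dep v)) * cis (th v u) - of_real (\<rho> ^ Suc (dep v)) * cis (th v w))"
    by (rule sep_v[OF assms(1-4)]) (use rho_pos in simp)
  also have "of_real (\<rho> ^ Suc (dep v)) * cis (th v u) - of_real (\<rho> ^ Suc (dep v)) * cis (th v w) = pos u - pos w"
    using nb_rep[OF assms(1,2)] nb_rep[OF assms(1,3)] lu lw by simp
  also have "cmod (pos u - pos w) \<le> cmod (pos u - z) + cmod (z - pos w)"
    using norm_triangle_ineq[of "pos u - z" "z - pos w"] by simp
  also have "\<dots> < ?R + ?R" using z by (intro add_strict_mono) (simp_all add: dist_norm norm_minus_commute)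
  finally have "4 * \<rho> ^ Suc (Suc (dep v)) < 4 * \<rho> ^ Suc (Suc (dep v))" by (simp add: algebra_simps)
  thus False by simp
qed

lemma LGd: assumes "v \<in> V" "u \<in> V" "u \<noteq> r" "par u = v"
  shows "pos v \<notin> ball (pos u) (2 * \<rho> ^ Suc (Suc (dep v)))"
proof
  assume "pos v \<in> ball (pos u) (2 * \<rho> ^ Suc (Suc (dep v)))"
  hence "cmod (pos u - pos v) < 2 * \<rho> ^ Suc (Suc (dep v))" by (simp add: dist_norm)
  moreover have "pos u - pos v = of_real (\<rho> ^ Suc (dep v)) * cis (th v u)"
    using child_vals(1)[OF assms(2,3)] par_props(3)[OF assms(2,3)] assms(4) by simp
  moreover have "cmod (of_real (\<rho> ^ Suc (dep v)) * cis (th v u)) = \<rho> ^ Suc (dep v)"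
    using rho_pos by (simp add: norm_mult del: of_real_power)
  ultimately have "\<rho> ^ Suc (dep v) < 2 * \<rho> * \<rho> ^ Suc (dep v)" by simp
  moreover have "2 * \<rho> * \<rho> ^ Suc (dep v) \<le> 1/2 * \<rho> ^ Suc (dep v)"
    using rho_le rho_pos by (intro mult_right_mono) simp_all
  ultimately show False using rho_pos by simp
qed

end


context otree begin

definition "anc j x = (par ^^ j) x"
definition "Dd x y \<longleftrightarrow> x \<in> V \<and> y \<in> V \<and> dep x \<le> dep y \<and> anc (dep y - dep x) y = x"

lemma anc_0: "anc 0 x = x" unfolding anc_def by simp
lemma anc_Suc: "anc (Suc j) x = par (anc j x)" unfolding anc_def by simp
lemma anc_Suc2: "anc (Suc j) x = anc j (par x)" unfolding anc_def by (simp add: funpow_Suc_right del: funpow.simps)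
lemma anc_add: "anc (i + j) x = anc i (anc j x)" unfolding anc_def by (simp add: funpow_add)

lemma anc_V: assumes "x \<in> V" "j \<le> dep x" shows "anc j x \<in> V \<and> dep (anc j x) = dep x - j"
  using assms(2)
proof (induction j)
  case 0 thus ?case using assms(1) by (simp add: anc_0)
next
  case (Suc j)
  hence IH: "anc j x \<in> V" "dep (anc j x) = dep x - j" by auto
  have "anc j x \<noteq> r" using IH(2) Suc.prems dep_r by auto
  thus ?case using par_props[OF IH(1)] IH unfolding anc_Suc by simp
qed

lemma Dd_refl: "x \<in> V \<Longrightarrow> Dd x x" unfolding Dd_def by (simp add: anc_0)

lemma Dd_root: assumes "y \<in> V" shows "Dd r y"
proof -
  have "anc (dep y) y \<in> V \<and> dep (anc (dep y) y) = 0" using anc_V[OF assms] by simp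
  hence "anc (dep y) y = r" using dep0 by blast
  thus ?thesis unfolding Dd_def using assms rV dep_r by simp
qed

lemma Dd_trans: assumes "Dd x y" "Dd y z" shows "Dd x z"
proof -
  have "dep z - dep x = (dep y - dep x) + (dep z - dep y)" using assms unfolding Dd_def by auto
  hence "anc (dep z - dep x) z = anc (dep y - dep x) (anc (dep z - dep y) z)" by (simp add: anc_add)
  thus ?thesis using assms unfolding Dd_def by auto
qed

lemma Dd_chain: assumes "Dd a y" "Dd b y" "dep a \<le> dep b" shows "Dd a b"
proof -
  have "dep y - dep a = (dep b - dep a) + (dep y - dep b)" using assms unfolding Dd_def by auto
  hence "anc (dep y - dep a) y = anc (dep b - dep a) (anc (dep y - dep b) y)" by (simp add: anc_add)
  thus ?thesis using assms unfolding Dd_def by auto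
qed

lemma Dd_par: assumes "y \<in> V" "y \<noteq> r" shows "Dd (par y) y"
  using par_props[OF assms] assms unfolding Dd_def by (simp add: anc_Suc anc_0)

lemma Dd_lt: assumes "Dd x y" "x \<noteq> y" shows "dep x < dep y"
proof (rule ccontr)
  assume "\<not> dep x < dep y"
  hence "dep y - dep x = 0" using assms(1) unfolding Dd_def by simp
  thus False using assms unfolding Dd_def by (simp add: anc_0)
qed

lemma Dd_ne_r: assumes "Dd x y" "x \<noteq> y" shows "y \<noteq> r"
  using Dd_lt[OF assms] dep_r by auto

lemma Dd_parR: assumes "Dd x y" "x \<noteq> y" shows "Dd x (par y)"
proof -
  have lt: "dep x < dep y" by (rule Dd_lt[OF assms])
  have yr: "y \<noteq> r" by (rule Dd_ne_r[OF assms])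
  have yV: "y \<in> V" using assms unfolding Dd_def by simp
  have d: "dep y = Suc (dep (par y))" using par_props(3)[OF yV yr] .
  have "dep y - dep x = Suc (dep (par y) - dep x)" using d lt by simp
  hence "anc (dep y - dep x) y = anc (dep (par y) - dep x) (par y)" by (simp add: anc_Suc2)
  thus ?thesis using assms(1) par_props(1)[OF yV yr] d lt unfolding Dd_def by auto
qed

lemma Dd_child: assumes "Dd x y" "x \<noteq> y"
  shows "\<exists>c. Dd c y \<and> c \<in> V \<and> c \<noteq> r \<and> par c = x \<and> dep c = Suc (dep x)"
proof -
  have lt: "dep x < dep y" by (rule Dd_lt[OF assms])
  have yV: "y \<in> V" and xV: "x \<in> V" using assms unfolding Dd_def by auto
  define c where "c = anc (dep y - dep x - 1) y"
  have cV: "c \<in> V \<and> dep c = dep y - (dep y - dep x - 1)" unfolding c_def using anc_V[OF yV] by simp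
  hence dc: "dep c = Suc (dep x)" using lt by simp
  have cr: "c \<noteq> r" using dc dep_r by auto
  have "par c = anc (Suc (dep y - dep x - 1)) y" unfolding c_def by (simp add: anc_Suc)
  also have "Suc (dep y - dep x - 1) = dep y - dep x" using lt by simp
  finally have pc: "par c = x" using assms(1) unfolding Dd_def by simp
  have "Dd c y" unfolding Dd_def using cV dc yV lt unfolding c_def by (simp add: c_def)
  thus ?thesis using cV cr pc dc by blast
qed

lemma LCA: assumes "x \<in> V" "y \<in> V" "\<not> Dd x y" "\<not> Dd y x"
  shows "\<exists>g cx cy. g \<in> V \<and> cx \<noteq> cy \<and> cx \<in> V \<and> cx \<noteq> r \<and> par cx = g \<and> cy \<in> V \<and> cy \<noteq> r \<and> par cy = g
      \<and> Dd cx x \<and> Dd cy y"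
proof -
  define C where "C = {g. Dd g x \<and> Dd g y}"
  have finC: "finite C" unfolding C_def Dd_def using finV by (auto intro: finite_subset)
  have rC: "r \<in> C" unfolding C_def using Dd_root assms by simp
  define m where "m = Max (dep ` C)"
  have "m \<in> dep ` C" unfolding m_def using finC rC by (intro Max_in) auto
  then obtain g where gC: "g \<in> C" and gm: "dep g = m" by blast
  have Dgx: "Dd g x" and Dgy: "Dd g y" using gC unfolding C_def by auto
  have gx: "g \<noteq> x" using Dgy assms(3) by blast
  have gy: "g \<noteq> y" using Dgx assms(4) by blast
  obtain cx where cx: "Dd cx x" "cx \<in> V" "cx \<noteq> r" "par cx = g" "dep cx = Suc (dep g)"
    using Dd_child[OF Dgx gx] by blast
  obtain cy where cy: "Dd cy y" "cy \<in> V" "cy \<noteq> r" "par cy = g" "dep cy = Suc (dep g)"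
    using Dd_child[OF Dgy gy] by blast
  have "cx \<noteq> cy"
  proof
    assume "cx = cy"
    hence "cx \<in> C" unfolding C_def using cx cy by simp
    hence "dep cx \<le> m" unfolding m_def using finC by simp
    thus False using cx(5) gm by simp
  qed
  moreover have "g \<in> V" using Dgx unfolding Dd_def by simp
  ultimately show ?thesis using cx cy by blast
qed

lemma ball_desc_aux: assumes "x \<in> V"
  shows "Dd x y \<Longrightarrow> dep y = dep x + j \<Longrightarrow>
    cmod (pos y - pos x) \<le> (\<rho> ^ Suc (dep x) - \<rho> ^ (Suc (dep x) + j)) / (1 - \<rho>)"
proof (induction j arbitrary: y)
  case 0
  hence "y = x" unfolding Dd_def by (simp add: anc_0)
  thus ?case by simp
next
  case (Suc j)
  have xy: "x \<noteq> y" using Suc.prems by auto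
  have yr: "y \<noteq> r" by (rule Dd_ne_r[OF Suc.prems(1) xy])
  have yV: "y \<in> V" using Suc.prems unfolding Dd_def by simp
  have dp: "dep y = Suc (dep (par y))" by (rule par_props(3)[OF yV yr])
  have IH: "cmod (pos (par y) - pos x) \<le> (\<rho> ^ Suc (dep x) - \<rho> ^ (Suc (dep x) + j)) / (1 - \<rho>)"
    using Suc.IH[OF Dd_parR[OF Suc.prems(1) xy]] dp Suc.prems(2) by simp
  have "pos y - pos x = (pos (par y) - pos x) + of_real (\<rho> ^ dep y) * cis (th (par y) y)"
    using child_vals(1)[OF yV yr] by simp
  hence "cmod (pos y - pos x) = cmod ((pos (par y) - pos x) + of_real (\<rho> ^ dep y) * cis (th (par y) y))"
    by (simp only:)
  also have "\<dots> \<le> cmod (pos (par y) - pos x) + cmod (of_real (\<rho> ^ dep y) * cis (th (par y) y))"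
    by (rule norm_triangle_ineq)
  also have "\<dots> = cmod (pos (par y) - pos x) + \<rho> ^ dep y"
    using rho_pos by (simp add: norm_mult del: of_real_power)
  also have "\<dots> \<le> (\<rho> ^ Suc (dep x) - \<rho> ^ (Suc (dep x) + j)) / (1 - \<rho>) + \<rho> ^ (Suc (dep x) + j)"
  proof -
    have "\<rho> ^ dep y = \<rho> ^ (Suc (dep x) + j)" using Suc.prems(2) by simp
    thus ?thesis using IH by linarith
  qed
  also have "\<dots> = (\<rho> ^ Suc (dep x) - \<rho> ^ (Suc (dep x) + Suc j)) / (1 - \<rho>)"
    using rho_le by (simp add: field_simps)
  finally show ?case .
qed

lemma ball_desc: assumes "Dd x y" shows "dist (pos y) (pos x) < 2 * \<rho> ^ Suc (dep x)"
proof -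
  have xV: "x \<in> V" using assms unfolding Dd_def by simp
  obtain j where j: "dep y = dep x + j" using assms unfolding Dd_def by (metis le_Suc_ex)
  have "dist (pos y) (pos x) \<le> (\<rho> ^ Suc (dep x) - \<rho> ^ (Suc (dep x) + j)) / (1 - \<rho>)"
    using ball_desc_aux[OF xV assms j] by (simp add: dist_norm)
  also have "\<dots> < \<rho> ^ Suc (dep x) / (1 - \<rho>)"
    using rho_pos rho_le by (intro divide_strict_right_mono) simp_all
  also have "\<dots> \<le> 2 * \<rho> ^ Suc (dep x)"
    using rho_pos rho_le by (simp add: field_simps)
  finally show ?thesis .
qed

lemma ball_desc': assumes "Dd x y" shows "pos y \<in> ball (pos x) (2 * \<rho> ^ Suc (dep x))"
  using ball_desc[OF assms] by (simp add: dist_commute)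

lemma edge_ball: assumes "a \<in> V" "a \<noteq> r" "Dd x (par a)"
  shows "closed_segment (pos (par a)) (pos a) \<subseteq> ball (pos x) (2 * \<rho> ^ Suc (dep x))"
proof (rule closed_segment_subset)
  show "pos (par a) \<in> ball (pos x) (2 * \<rho> ^ Suc (dep x))" by (rule ball_desc'[OF assms(3)])
  show "pos a \<in> ball (pos x) (2 * \<rho> ^ Suc (dep x))" by (rule ball_desc'[OF Dd_trans[OF assms(3) Dd_par[OF assms(1,2)]]])
  show "convex (ball (pos x) (2 * \<rho> ^ Suc (dep x)))" by simp
qed

end


context otree begin

lemma child_nb: assumes "c \<in> V" "c \<noteq> r" shows "c \<in> nbrs E (par c)"
  using nbrs_iff[OF par_props(1)[OF assms]] assms by simp

lemma par_nb: assumes "v \<in> V" "v \<noteq> r" shows "par v \<in> nbrs E v"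
  using nbrs_iff[OF assms(1)] assms by simp

lemma par_ne_child: assumes "c \<in> V" "c \<noteq> r" "v \<in> V" "v \<noteq> r" "par c = v" shows "c \<noteq> par v"
  using par_props(3)[OF assms(1,2)] par_props(3)[OF assms(3,4)] assms(5) by auto

lemma child_ball: assumes "Dd x y" "x \<noteq> y"
  shows "\<exists>c. Dd c y \<and> c \<in> V \<and> c \<noteq> r \<and> par c = x \<and> pos y \<in> ball (pos c) (2 * \<rho> ^ Suc (Suc (dep x)))"
proof -
  obtain c where c: "Dd c y" "c \<in> V" "c \<noteq> r" "par c = x" "dep c = Suc (dep x)"
    using Dd_child[OF assms] by blast
  thus ?thesis using ball_desc'[OF c(1)] by auto
qed

lemma inj_pos: "inj_on pos V"
proof (rule inj_onI, rule ccontr)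
  fix x y assume xV: "x \<in> V" and yV: "y \<in> V" and eq: "pos x = pos y" and ne: "x \<noteq> y"
  have case1: False if D: "Dd a b" "a \<noteq> b" "pos a = pos b" for a b
  proof -
    obtain c where c: "c \<in> V" "c \<noteq> r" "par c = a" "pos b \<in> ball (pos c) (2 * \<rho> ^ Suc (Suc (dep a)))"
      using child_ball[OF D(1,2)] by blast
    have aV: "a \<in> V" using D unfolding Dd_def by simp
    show False using LGd[OF aV c(1-3)] c(4) D(3) by simp
  qed
  show False
  proof (cases "Dd x y \<or> Dd y x")
    case True
    thus False
    proof
      assume "Dd x y" thus False using case1[of x y] ne eq by blast
    next
      assume "Dd y x" thus False using case1[of y x] ne eq by metis
    qed
  next
    case False
    then obtain g cx cy where L: "g \<in> V" "cx \<noteq> cy" "cx \<in> V" "cx \<noteq> r" "par cx = g" "cy \<in> V" "cy \<noteq> r"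
      "par cy = g" "Dd cx x" "Dd cy y" using LCA[OF xV yV] by blast
    have dc: "dep cx = Suc (dep g)" "dep cy = Suc (dep g)" using par_props(3)[OF L(3,4)] par_props(3)[OF L(6,7)] L(5,8) by simp_all
    have "pos x \<in> ball (pos cx) (2 * \<rho> ^ Suc (Suc (dep g)))" using ball_desc'[OF L(9)] dc by simp
    moreover have "pos y \<in> ball (pos cy) (2 * \<rho> ^ Suc (Suc (dep g)))" using ball_desc'[OF L(10)] dc by simp
    moreover have "cx \<in> nbrs E g" "cy \<in> nbrs E g" using child_nb[OF L(3,4)] child_nb[OF L(6,7)] L(5,8) by simp_all
    ultimately have "pos x \<in> ball (pos cx) (2 * \<rho> ^ Suc (Suc (dep g))) \<inter> ball (pos cy) (2 * \<rho> ^ Suc (Suc (dep g)))"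
      using eq by simp
    thus False using LGc[OF L(1) \<open>cx \<in> nbrs E g\<close> \<open>cy \<in> nbrs E g\<close> L(2) L(3-8)] by blast
  qed
qed

lemma vert_edge: assumes "w \<in> V" "a \<in> V" "a \<noteq> r" "w \<noteq> a" "w \<noteq> par a"
  shows "pos w \<notin> closed_segment (pos (par a)) (pos a)"
proof
  assume wz: "pos w \<in> closed_segment (pos (par a)) (pos a)"
  have paV: "par a \<in> V" and pnb: "par a \<in> nbrs E a" using par_props(1)[OF assms(2,3)] par_nb[OF assms(2,3)] by auto
  consider "Dd a w" | "Dd w a" | "\<not> Dd a w" "\<not> Dd w a" by blast
  thus False
  proof cases
    case 1
    obtain c where c: "c \<in> V" "c \<noteq> r" "par c = a" "pos w \<in> ball (pos c) (2 * \<rho> ^ Suc (Suc (dep a)))"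
      using child_ball[OF 1] assms(4) by metis
    have "c \<noteq> par a" using par_ne_child[OF c(1,2) assms(2,3) c(3)] .
    from LGb[OF assms(2) child_nb[OF c(1,2), unfolded c(3)] pnb this c(1-3)] c(4) wz
    show False by (auto simp: closed_segment_commute)
  next
    case 2
    have Dwp: "Dd w (par a)" using Dd_parR[OF 2] assms(4) by metis
    obtain c where c: "Dd c (par a)" "c \<in> V" "c \<noteq> r" "par c = w" "dep c = Suc (dep w)"
      using Dd_child[OF Dwp assms(5)] by blast
    have "pos w \<in> ball (pos c) (2 * \<rho> ^ Suc (dep c))" using edge_ball[OF assms(2,3) c(1)] wz by blast
    thus False using LGd[OF assms(1) c(2-4)] c(5) by simp
  next
    case 3
    then obtain g cw ca where L: "g \<in> V" "cw \<noteq> ca" "cw \<in> V" "cw \<noteq> r" "par cw = g" "ca \<in> V" "ca \<noteq> r"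
      "par ca = g" "Dd cw w" "Dd ca a" using LCA[OF assms(1,2)] by blast
    have dc: "dep cw = Suc (dep g)" "dep ca = Suc (dep g)" using par_props(3)[OF L(3,4)] par_props(3)[OF L(6,7)] L(5,8) by simp_all
    have pw: "pos w \<in> ball (pos cw) (2 * \<rho> ^ Suc (Suc (dep g)))" using ball_desc'[OF L(9)] dc by simp
    have nb: "cw \<in> nbrs E g" "ca \<in> nbrs E g" using child_nb[OF L(3,4)] child_nb[OF L(6,7)] L(5,8) by simp_all
    show False
    proof (cases "ca = a")
      case True
      thus False using LGb[OF L(1) nb L(2) L(3-5)] pw wz L(8) by blast
    next
      case False
      have "Dd ca (par a)" using Dd_parR[OF L(10) False] .
      hence "closed_segment (pos (par a)) (pos a) \<subseteq> ball (pos ca) (2 * \<rho> ^ Suc (dep ca))"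
        by (rule edge_ball[OF assms(2,3)])
      hence "pos w \<in> ball (pos ca) (2 * \<rho> ^ Suc (Suc (dep g)))" using wz dc by auto
      thus False using LGc[OF L(1) nb L(2) L(3-8)] pw by blast
    qed
  qed
qed

lemma edge_edge_desc: assumes "a \<in> V" "a \<noteq> r" "b \<in> V" "b \<noteq> r" "a \<noteq> b" "Dd a b"
  shows "closed_segment (pos (par a)) (pos a) \<inter> closed_segment (pos (par b)) (pos b) \<subseteq> pos ` ({par a, a} \<inter> {par b, b})"
proof (cases "par b = a")
  case True
  have pnb: "par a \<in> nbrs E a" by (rule par_nb[OF assms(1,2)])
  have bnb: "b \<in> nbrs E a" using child_nb[OF assms(3,4)] True by simp
  have "par a \<noteq> b" using par_ne_child[OF assms(3,4,1,2) True] by simp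
  from LGa[OF assms(1) pnb bnb this]
  have "closed_segment (pos (par a)) (pos a) \<inter> closed_segment (pos (par b)) (pos b) \<subseteq> {pos a}"
    using True by (simp add: closed_segment_commute)
  thus ?thesis using True by auto
next
  case False
  obtain c where c: "Dd c b" "c \<in> V" "c \<noteq> r" "par c = a" "dep c = Suc (dep a)"
    using Dd_child[OF assms(6,5)] by blast
  have cb: "c \<noteq> b" using False c(4) by blast
  have "closed_segment (pos (par b)) (pos b) \<subseteq> ball (pos c) (2 * \<rho> ^ Suc (dep c))"
    using edge_ball[OF assms(3,4) Dd_parR[OF c(1) cb]] .
  moreover have "c \<noteq> par a" using par_ne_child[OF c(2,3) assms(1,2) c(4)] .
  moreover have "c \<in> nbrs E a" using child_nb[OF c(2,3)] c(4) by simp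
  ultimately have "closed_segment (pos (par a)) (pos a) \<inter> closed_segment (pos (par b)) (pos b) = {}"
    using LGb[OF assms(1) _ par_nb[OF assms(1,2)] _ c(2-4)] c(5) by (auto simp: closed_segment_commute)
  thus ?thesis by simp
qed

lemma edge_edge: assumes "a \<in> V" "a \<noteq> r" "b \<in> V" "b \<noteq> r" "a \<noteq> b"
  shows "closed_segment (pos (par a)) (pos a) \<inter> closed_segment (pos (par b)) (pos b) \<subseteq> pos ` ({par a, a} \<inter> {par b, b})"
proof -
  consider "Dd a b" | "Dd b a" | "\<not> Dd a b" "\<not> Dd b a" by blast
  thus ?thesis
  proof cases
    case 1 thus ?thesis using edge_edge_desc[OF assms] by blast
  next
    case 2 thus ?thesis using edge_edge_desc[OF assms(3,4,1,2) assms(5)[symmetric]] by blast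
  next
    case 3
    then obtain g ca cb where L: "g \<in> V" "ca \<noteq> cb" "ca \<in> V" "ca \<noteq> r" "par ca = g" "cb \<in> V" "cb \<noteq> r"
      "par cb = g" "Dd ca a" "Dd cb b" using LCA[OF assms(1,3)] by blast
    have dc: "dep ca = Suc (dep g)" "dep cb = Suc (dep g)" using par_props(3)[OF L(3,4)] par_props(3)[OF L(6,7)] L(5,8) by simp_all
    have nb: "ca \<in> nbrs E g" "cb \<in> nbrs E g" using child_nb[OF L(3,4)] child_nb[OF L(6,7)] L(5,8) by simp_all
    let ?R = "2 * \<rho> ^ Suc (Suc (dep g))"
    have SA: "closed_segment (pos (par a)) (pos a) \<subseteq> ball (pos ca) ?R" if "ca \<noteq> a"
      using edge_ball[OF assms(1,2) Dd_parR[OF L(9) that]] dc by simp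
    have SB: "closed_segment (pos (par b)) (pos b) \<subseteq> ball (pos cb) ?R" if "cb \<noteq> b"
      using edge_ball[OF assms(3,4) Dd_parR[OF L(10) that]] dc by simp
    show ?thesis
    proof (cases "ca = a"; cases "cb = b")
      assume "ca = a" "cb = b"
      have "closed_segment (pos g) (pos ca) \<inter> closed_segment (pos g) (pos cb) \<subseteq> {pos g}"
        by (rule LGa[OF L(1) nb L(2)])
      hence "closed_segment (pos (par a)) (pos a) \<inter> closed_segment (pos (par b)) (pos b) \<subseteq> {pos g}"
        using \<open>ca = a\<close> \<open>cb = b\<close> L(5,8) by simp
      moreover have "g \<in> {par a, a} \<inter> {par b, b}" using \<open>ca = a\<close> \<open>cb = b\<close> L by simp
      ultimately show ?thesis by blast
    next
      assume h: "ca = a" "cb \<noteq> b"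
      have "ball (pos cb) ?R \<inter> closed_segment (pos g) (pos ca) = {}"
        by (rule LGb[OF L(1) nb(2) nb(1) L(2)[symmetric] L(6-8)])
      moreover have "closed_segment (pos (par a)) (pos a) = closed_segment (pos g) (pos ca)" using h L(5) by simp
      ultimately have "closed_segment (pos (par a)) (pos a) \<inter> closed_segment (pos (par b)) (pos b) = {}"
        using SB[OF h(2)] by blast
      thus ?thesis by simp
    next
      assume h: "ca \<noteq> a" "cb = b"
      have "ball (pos ca) ?R \<inter> closed_segment (pos g) (pos cb) = {}"
        by (rule LGb[OF L(1) nb L(2) L(3-5)])
      moreover have "closed_segment (pos (par b)) (pos b) = closed_segment (pos g) (pos cb)" using h L(8) by simp
      ultimately have "closed_segment (pos (par a)) (pos a) \<inter> closed_segment (pos (par b)) (pos b) = {}"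
        using SA[OF h(1)] by blast
      thus ?thesis by simp
    next
      assume h: "ca \<noteq> a" "cb \<noteq> b"
      have "ball (pos ca) ?R \<inter> ball (pos cb) ?R = {}" by (rule LGc[OF L(1) nb L(2) L(3-8)])
      hence "closed_segment (pos (par a)) (pos a) \<inter> closed_segment (pos (par b)) (pos b) = {}"
        using SA[OF h(1)] SB[OF h(2)] by blast
      thus ?thesis by simp
    qed
  qed
qed

end


lemma cos_sq_ge_half: assumes "0 \<le> a" "a \<le> pi/4" shows "1/2 \<le> (cos a)^2"
proof -
  have "cos (pi/4) \<le> cos a" using assms by (intro cos_monotone_0_pi_le) auto
  hence "sqrt 2 / 2 \<le> cos a" by (simp add: cos_45)
  hence "(sqrt 2 / 2)^2 \<le> (cos a)^2" by (intro power_mono) auto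
  thus ?thesis by (simp add: power_divide)
qed

lemma angle_bound:
  fixes k L1 L2 :: nat and t1 t2 :: real
  assumes k: "1 \<le> k" and L: "L1 < k" "L2 < k"
    and cond: "L1 \<noteq> L2 \<or> (pi / (4 * real k) \<le> \<bar>t1 - t2\<bar> / 2 \<and> \<bar>t1 - t2\<bar> / 2 \<le> pi / 4)"
  defines "a1 \<equiv> pi / (4 * real k) * real L1" and "a2 \<equiv> pi / (4 * real k) * real L2"
  shows "pi / (4 * real k) \<le> arccos (cos a1 * cos a2 * cos (t1 - t2) + sin a1 * sin a2)"
proof -
  let ?r = "pi / (4 * real k)"
  let ?D = "cos a1 * cos a2 * cos (t1 - t2) + sin a1 * sin a2"
  have kpos: "0 < real k" using k by simp
  have rpos: "0 < ?r" using kpos by simp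
  have r_le: "?r \<le> pi / 4" by (rule divide_left_mono) (use k in auto)
  have aR: "?r * real L \<le> pi / 4" if "L < k" for L
  proof -
    have "?r * real L \<le> ?r * real k" using that rpos by (intro mult_left_mono) auto
    also have "\<dots> = pi / 4" using kpos by simp
    finally show ?thesis .
  qed
  have a1b: "0 \<le> a1" "a1 \<le> pi/4" unfolding a1_def using aR[OF L(1)] rpos by auto
  have a2b: "0 \<le> a2" "a2 \<le> pi/4" unfolding a2_def using aR[OF L(2)] rpos by auto
  have c1: "0 \<le> cos a1" "0 \<le> cos a2" using a1b a2b by (auto intro!: cos_ge_zero)
  have s1: "0 \<le> sin a1" "0 \<le> sin a2" using a1b a2b by (auto intro!: sin_ge_zero)
  have Dlow: "-1 \<le> ?D"
  proof -
    have cc: "cos a1 * cos a2 \<le> 1" using c1 by (intro mult_le_one) auto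
    have cc0: "0 \<le> cos a1 * cos a2" using c1 by simp
    have "cos a1 * cos a2 * (-1) \<le> cos a1 * cos a2 * cos (t1 - t2)"
      by (rule mult_left_mono[OF cos_ge_minus_one cc0])
    hence "- (cos a1 * cos a2) \<le> cos a1 * cos a2 * cos (t1 - t2)" by simp
    thus ?thesis using cc s1 by (smt (verit) mult_nonneg_nonneg)
  qed
  have Dup: "?D \<le> cos ?r"
  proof (cases "L1 = L2")
    case False
    have "?D \<le> cos a1 * cos a2 + sin a1 * sin a2"
      using c1 by (simp add: mult_left_le mult_nonneg_nonneg)
    also have "\<dots> = cos \<bar>a1 - a2\<bar>" by (simp add: cos_diff)
    also have "\<dots> \<le> cos ?r"
    proof (rule cos_monotone_0_pi_le)
      have "a1 - a2 = ?r * (real L1 - real L2)" unfolding a1_def a2_def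
        by (simp add: right_diff_distrib)
      hence "\<bar>a1 - a2\<bar> = ?r * \<bar>real L1 - real L2\<bar>" using rpos by (simp add: abs_mult)
      moreover have "1 \<le> \<bar>real L1 - real L2\<bar>" using False by linarith
      moreover have "?r * 1 \<le> ?r * \<bar>real L1 - real L2\<bar>"
        using calculation(2) rpos by (intro mult_left_mono) auto
      ultimately show "?r \<le> \<bar>a1 - a2\<bar>" by linarith
      show "\<bar>a1 - a2\<bar> \<le> pi" using a1b a2b by linarith
      show "0 \<le> ?r" using rpos by simp
    qed
    finally show ?thesis .
  next
    case True
    hence a: "a1 = a2" unfolding a1_def a2_def by simp
    have psi: "?r \<le> \<bar>t1 - t2\<bar> / 2" "\<bar>t1 - t2\<bar> / 2 \<le> pi / 4" using cond True by auto
    let ?p = "(t1 - t2) / 2"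
    have e2: "2 * ?p = t1 - t2" by simp
    have cf: "cos (t1 - t2) = 1 - 2 * (sin ?p)^2" using cos_double_sin[of ?p] unfolding e2 .
    have "?D = (cos a1)^2 * cos (t1 - t2) + (sin a1)^2" using a by (simp add: power2_eq_square)
    also have "\<dots> = (cos a1)^2 * (1 - 2 * (sin ?p)^2) + (sin a1)^2" using cf by simp
    also have "\<dots> = ((sin a1)^2 + (cos a1)^2) - 2 * (cos a1)^2 * (sin ?p)^2" by (simp add: algebra_simps)
    also have "\<dots> = 1 - 2 * (cos a1)^2 * (sin ?p)^2" by (simp only: sin_cos_squared_add)
    finally have Deq: "?D = 1 - 2 * (cos a1)^2 * (sin ?p)^2" .
    have "?D \<le> 1 - (sin ?p)^2"
    proof -
      have "1/2 \<le> (cos a1)^2" by (rule cos_sq_ge_half[OF a1b])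
      hence "1 * (sin ?p)^2 \<le> (2 * (cos a1)^2) * (sin ?p)^2"
        by (intro mult_right_mono) auto
      thus ?thesis unfolding Deq by simp
    qed
    also have "\<dots> = (cos \<bar>?p\<bar>)^2"
    proof -
      have "cos \<bar>?p\<bar> = cos ?p" by (rule cos_abs_real)
      thus ?thesis by (simp add: cos_squared_eq)
    qed
    also have "\<dots> \<le> cos \<bar>?p\<bar>"
    proof -
      have "\<bar>?p\<bar> = \<bar>t1 - t2\<bar> / 2" by (simp add: abs_divide)
      hence "\<bar>?p\<bar> \<le> pi/2" using psi pi_gt_zero by linarith
      hence "0 \<le> cos \<bar>?p\<bar>" by (intro cos_ge_zero) auto
      moreover have "cos \<bar>?p\<bar> \<le> 1" by simp
      ultimately show ?thesis by (simp add: power2_eq_square mult_left_le)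
    qed
    also have "\<dots> \<le> cos ?r"
      using psi rpos by (intro cos_monotone_0_pi_le) auto
    finally show ?thesis .
  qed
  have "arccos (cos ?r) \<le> arccos ?D"
    by (rule arccos_le_arccos[OF Dlow Dup]) simp
  moreover have "arccos (cos ?r) = ?r" using rpos r_le by (intro arccos_cos) auto
  ultimately show ?thesis by simp
qed



lemma same_level:
  fixes L su sw k :: nat
  assumes "1 \<le> k" "(L + su) mod k = (L + sw) mod k" "su \<noteq> sw"
  shows "real k \<le> \<bar>real su - real sw\<bar>"
proof -
  have "int ((L + su) mod k) = int ((L + sw) mod k)" using assms(2) by simp
  hence "(int L + int su) mod int k = (int L + int sw) mod int k" by (simp add: zmod_int)
  hence "int k dvd (int L + int su) - (int L + int sw)" by (simp only: mod_eq_dvd_iff)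
  hence d: "int k dvd int su - int sw" by simp
  have "int su - int sw \<noteq> 0" using assms(3) by simp
  from dvd_imp_le_int[OF this d] have "int k \<le> \<bar>int su - int sw\<bar>" by simp
  hence "real_of_int (int k) \<le> real_of_int \<bar>int su - int sw\<bar>" by (simp only: of_int_le_iff)
  thus ?thesis by simp
qed

lemma rot_nat:
  fixes s n x M :: nat
  assumes "s < n" "x < n" "x \<noteq> s" "n \<le> M"
  shows "(if s \<le> (s+1) mod n then (s+1) mod n - s else M + (s+1) mod n - s)
       \<le> (if s \<le> x then x - s else M + x - s)"
proof (cases "s + 1 < n")
  case True
  hence "(s+1) mod n = s + 1" by simp
  thus ?thesis using assms by auto
next
  case False
  hence "s + 1 = n" using assms by simp
  hence m: "(s+1) mod n = 0" by simp
  have "0 < s" using assms \<open>s + 1 = n\<close> by (cases s) auto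
  moreover have "x < s" using assms \<open>s + 1 = n\<close> by simp
  ultimately show ?thesis using m assms by auto
qed

context otree begin

definition "fs s w = (if s \<le> w then w - s else N + w - s)"

lemma cis_plus_2pi: "cis (a + 2 * pi) = cis a"
  by (simp add: cis_mult[symmetric])

lemma arg_nb: assumes "v \<in> V" "u \<in> nbrs E v" "w \<in> nbrs E v"
  shows "Arg2pi ((pos w - pos v) / (pos u - pos v)) = 2 * pi * real (fs (slot v u) (slot v w)) / real N"
proof -
  let ?su = "slot v u" and ?sw = "slot v w"
  have Npos: "0 < real N" using N_ge by simp
  have su: "?su < N" and sw: "?sw < N"
    using slot_lt[OF assms(1,2)] slot_lt[OF assms(1,3)] deg_le[OF assms(1)] unfolding N_def by linarith+
  have q: "(pos w - pos v) / (pos u - pos v) = of_real (len v w / len v u) * cis (th v w - th v u)"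
    using nb_rep[OF assms(1,2)] nb_rep[OF assms(1,3)] len_pos[of v u]
    by (simp add: cis_divide[symmetric])
  have c: "cis (th v w - th v u) = cis (2 * pi * real (fs ?su ?sw) / real N)"
  proof (cases "?su \<le> ?sw")
    case True
    have e1: "th v w - th v u = 2 * pi * (real ?sw - real ?su) / real N"
      unfolding th_def using Npos by (simp add: field_simps)
    have "real (fs ?su ?sw) = real ?sw - real ?su" unfolding fs_def using True by (simp add: of_nat_diff)
    hence "th v w - th v u = 2 * pi * real (fs ?su ?sw) / real N" using e1 by simp
    thus ?thesis by simp
  next
    case False
    hence "real (fs ?su ?sw) = real N + real ?sw - real ?su" unfolding fs_def using su by (simp add: of_nat_diff)
    hence "2 * pi * real (fs ?su ?sw) / real N = 2 * pi * (real N + real ?sw - real ?su) / real N" by simp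
    also have "\<dots> = (th v w - th v u) + 2 * pi"
      unfolding th_def using Npos by (simp add: field_simps)
    finally have "2 * pi * real (fs ?su ?sw) / real N = (th v w - th v u) + 2 * pi" .
    thus ?thesis by (simp add: cis_plus_2pi)
  qed
  show ?thesis
  proof (rule Arg2pi_unique)
    show "of_real (len v w / len v u) * exp (\<i> * of_real (2 * pi * real (fs ?su ?sw) / real N)) =
      (pos w - pos v) / (pos u - pos v)" unfolding q c by (simp add: cis_conv_exp)
    show "0 < len v w / len v u" using len_pos by simp
    show "0 \<le> 2 * pi * real (fs ?su ?sw) / real N" using Npos by simp
    have "fs ?su ?sw < N" unfolding fs_def using su sw by auto
    hence "real (fs ?su ?sw) < real N" by simp
    thus "2 * pi * real (fs ?su ?sw) / real N < 2 * pi" using Npos by (simp add: divide_less_eq)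
  qed
qed

lemma rotation_ok: assumes "v \<in> V" "u \<in> nbrs E v" "x \<in> nbrs E v" "x \<noteq> u"
  shows "Arg2pi ((pos (\<sigma> v u) - pos v) / (pos u - pos v)) \<le> Arg2pi ((pos x - pos v) / (pos u - pos v))"
proof -
  have sn: "\<sigma> v u \<in> nbrs E v" by (rule sigma_in[OF assms(1,2)])
  have "fs (slot v u) (slot v (\<sigma> v u)) \<le> fs (slot v u) (slot v x)"
    unfolding fs_def slot_succ[OF assms(1,2)]
  proof (rule rot_nat)
    show "slot v u < deg v" "slot v x < deg v" using slot_lt assms by auto
    show "slot v x \<noteq> slot v u" using slot_inj[OF assms(1,3,2)] assms(4) by blast
    show "deg v \<le> N" using deg_le[OF assms(1)] unfolding N_def by simp
  qed
  hence "real (fs (slot v u) (slot v (\<sigma> v u))) \<le> real (fs (slot v u) (slot v x))" by simp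
  hence "2 * pi * real (fs (slot v u) (slot v (\<sigma> v u))) / real N \<le> 2 * pi * real (fs (slot v u) (slot v x)) / real N"
    by (intro divide_right_mono mult_left_mono) auto
  thus ?thesis unfolding arg_nb[OF assms(1,2) sn] arg_nb[OF assms(1,2,3)] .
qed

definition "al e = pi / (4 * real k) * real (lev (SOME a. a \<in> V \<and> a \<noteq> r \<and> e = {par a, a}))"

lemma al_edge: assumes "a \<in> V" "a \<noteq> r" shows "al {par a, a} = pi / (4 * real k) * real (lev a)"
proof -
  have "(SOME b. b \<in> V \<and> b \<noteq> r \<and> {par a, a} = {par b, b}) = a"
  proof (rule some_equality)
    show "a \<in> V \<and> a \<noteq> r \<and> {par a, a} = {par a, a}" using assms by simp
    show "b = a" if "b \<in> V \<and> b \<noteq> r \<and> {par a, a} = {par b, b}" for b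
      using par_inj[of b a] that assms by auto
  qed
  thus ?thesis unfolding al_def by simp
qed

lemma al_nb: assumes "v \<in> V" "u \<in> nbrs E v"
  shows "al {v, u} = pi / (4 * real k) * real ((lev v + slot v u) mod k)"
proof -
  consider "v \<noteq> r" "u = par v" | "u \<in> V" "u \<noteq> r" "par u = v" using nbrs_iff[OF assms(1)] assms(2) by blast
  thus ?thesis
  proof cases
    case 1
    have "{v, u} = {par v, v}" using 1 by blast
    hence "al {v, u} = pi / (4 * real k) * real (lev v)" using al_edge[OF assms(1) 1(1)] by simp
    moreover have "(lev v + slot v u) mod k = lev v" using slot_par[OF assms(1) 1(1)] 1(2) lev_lt[of v] by simp
    ultimately show ?thesis by simp
  next
    case 2
    have "{v, u} = {par u, u}" using 2 by blast
    hence "al {v, u} = pi / (4 * real k) * real (lev u)" using al_edge[OF 2(1,2)] by simp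
    thus ?thesis using child_vals(3)[OF 2(1,2)] 2(3) by simp
  qed
qed

lemma al_range: "0 \<le> al e \<and> al e \<le> pi / 2"
proof -
  let ?L = "lev (SOME a. a \<in> V \<and> a \<noteq> r \<and> e = {par a, a})"
  have kpos: "0 < real k" using k1 by simp
  have "?L < k" by (rule lev_lt)
  hence "real ?L \<le> real k" by simp
  hence "pi / (4 * real k) * real ?L \<le> pi / (4 * real k) * real k" using kpos by (intro mult_left_mono) auto
  also have "\<dots> = pi / 4" using kpos by simp
  finally have X: "pi / (4 * real k) * real ?L \<le> pi / 4" .
  have Y: "0 \<le> pi / (4 * real k) * real ?L" using kpos by simp
  have "al e = pi / (4 * real k) * real ?L" unfolding al_def by simp
  thus ?thesis using X Y pi_gt_zero by linarith
qed

lemma tangent_nb: assumes "v \<in> V" "u \<in> nbrs E v"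
  shows "arc_tangent pos a v u = tvec a (th v u)"
proof -
  have "pos u - pos v = of_real (len v u) * cis (th v u)" using nb_rep[OF assms] by simp
  moreover have "cmod (of_real (len v u) * cis (th v u)) = len v u" using len_pos[of v u] by (simp add: norm_mult)
  ultimately have "(pos u - pos v) / of_real (cmod (pos u - pos v)) = cis (th v u)"
    using len_pos[of v u] by simp
  thus ?thesis unfolding arc_tangent_def tvec_def Let_def by simp
qed

lemma angle_ok: assumes "v \<in> V" "u \<in> nbrs E v" "w \<in> nbrs E v" "u \<noteq> w"
  shows "pi / (4 * real k) \<le> vec_angle (arc_tangent pos (al {v, u}) v u) (arc_tangent pos (al {v, w}) v w)"
proof -
  let ?L1 = "(lev v + slot v u) mod k" and ?L2 = "(lev v + slot v w) mod k"
  let ?a1 = "pi / (4 * real k) * real ?L1" and ?a2 = "pi / (4 * real k) * real ?L2"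
  have "vec_angle (arc_tangent pos (al {v, u}) v u) (arc_tangent pos (al {v, w}) v w)
      = vec_angle (tvec ?a1 (th v u)) (tvec ?a2 (th v w))"
    unfolding tangent_nb[OF assms(1,2)] tangent_nb[OF assms(1,3)] al_nb[OF assms(1,2)] al_nb[OF assms(1,3)] ..
  also have "\<dots> = arccos (cos ?a1 * cos ?a2 * cos (th v u - th v w) + sin ?a1 * sin ?a2)"
    unfolding vec_angle_def tvec_norm tvec_inner by simp
  finally have eq: "vec_angle (arc_tangent pos (al {v, u}) v u) (arc_tangent pos (al {v, w}) v w)
      = arccos (cos ?a1 * cos ?a2 * cos (th v u - th v w) + sin ?a1 * sin ?a2)" .
  have cond: "?L1 \<noteq> ?L2 \<or> (pi / (4 * real k) \<le> \<bar>th v u - th v w\<bar> / 2 \<and> \<bar>th v u - th v w\<bar> / 2 \<le> pi / 4)"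
  proof (cases "?L1 = ?L2")
    case False thus ?thesis by blast
  next
    case True
    let ?D = "real (slot v u) - real (slot v w)"
    have ne: "slot v u \<noteq> slot v w" using slot_inj[OF assms(1-3)] assms(4) by blast
    have D1: "real k \<le> \<bar>?D\<bar>" by (rule same_level[OF k1 True ne])
    have "slot v u < k^2" "slot v w < k^2"
      using slot_lt[OF assms(1,2)] slot_lt[OF assms(1,3)] deg_le[OF assms(1)] by linarith+
    hence "real (slot v u) < real k ^ 2" "real (slot v w) < real k ^ 2" by (metis of_nat_less_iff of_nat_power)+
    hence D2: "\<bar>?D\<bar> \<le> real k ^ 2" by linarith
    have kpos: "0 < real k" using k1 by simp
    have "th v u - th v w = (pi / (2 * (real k)^2)) * ?D"
      unfolding th_def N_def using kpos by (simp add: field_simps)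
    hence "\<bar>th v u - th v w\<bar> = (pi / (2 * (real k)^2)) * \<bar>?D\<bar>"
      using kpos pi_gt_zero by (simp add: abs_mult)
    hence eqh: "\<bar>th v u - th v w\<bar> / 2 = pi * \<bar>?D\<bar> / (4 * (real k)^2)" by simp
    have "pi / (4 * real k) = pi * real k / (4 * (real k)^2)" using kpos by (simp add: power2_eq_square)
    also have "\<dots> \<le> pi * \<bar>?D\<bar> / (4 * (real k)^2)" using D1 kpos
      by (intro divide_right_mono mult_left_mono) auto
    finally have A: "pi / (4 * real k) \<le> \<bar>th v u - th v w\<bar> / 2" unfolding eqh .
    have "pi * \<bar>?D\<bar> / (4 * (real k)^2) \<le> pi * (real k)^2 / (4 * (real k)^2)" using D2 kpos
      by (intro divide_right_mono mult_left_mono) auto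
    also have "\<dots> = pi / 4" using kpos by simp
    finally have B: "\<bar>th v u - th v w\<bar> / 2 \<le> pi / 4" unfolding eqh .
    show ?thesis using A B by blast
  qed
  have "pi / (4 * real k) \<le> arccos (cos ?a1 * cos ?a2 * cos (th v u - th v w) + sin ?a1 * sin ?a2)"
    using angle_bound[OF k1 _ _ cond] k1 by simp
  thus ?thesis unfolding eq .
qed

lemma drawing_ok:
  shows "arc_diagram_drawing V E pos al" "straight_line_drawing V E \<sigma> pos"
    "angular_resolution_ge V E pos al (pi / (4 * real k))"
proof -
  show "arc_diagram_drawing V E pos al"
    unfolding arc_diagram_drawing_def using inj_pos al_range by simp
  show "angular_resolution_ge V E pos al (pi / (4 * real k))"
    unfolding angular_resolution_ge_def
  proof (intro ballI impI)
    fix v u w assume "v \<in> V" "u \<in> nbrs E v" "w \<in> nbrs E v" "u \<noteq> w"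
    thus "pi / (4 * real k) \<le> vec_angle (arc_tangent pos (al {v, u}) v u) (arc_tangent pos (al {v, w}) v w)"
      by (rule angle_ok)
  qed
  have E1: "\<exists>a. a \<in> V \<and> a \<noteq> r \<and> e = {par a, a}" if "e \<in> E" for e
    using that E_eq unfolding Tr_def by blast
  have hull: "convex hull (pos ` {par a, a}) = closed_segment (pos (par a)) (pos a)" for a
    by (simp add: segment_convex_hull)
  have c2: "\<forall>e\<in>E. \<forall>w\<in>V. w \<notin> e \<longrightarrow> pos w \<notin> convex hull (pos ` e)"
  proof (intro ballI impI)
    fix e w assume "e \<in> E" "w \<in> V" "w \<notin> e"
    then obtain a where a: "a \<in> V" "a \<noteq> r" "e = {par a, a}" using E1 by blast
    show "pos w \<notin> convex hull (pos ` e)" unfolding a(3) hull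
      using vert_edge[OF \<open>w \<in> V\<close> a(1,2)] \<open>w \<notin> e\<close> a(3) by blast
  qed
  have c3: "\<forall>e\<in>E. \<forall>f\<in>E. e \<noteq> f \<longrightarrow> convex hull (pos ` e) \<inter> convex hull (pos ` f) \<subseteq> pos ` (e \<inter> f)"
  proof (intro ballI impI)
    fix e f assume "e \<in> E" "f \<in> E" "e \<noteq> f"
    obtain a where a: "a \<in> V" "a \<noteq> r" "e = {par a, a}" using E1 \<open>e \<in> E\<close> by blast
    obtain b where b: "b \<in> V" "b \<noteq> r" "f = {par b, b}" using E1 \<open>f \<in> E\<close> by blast
    have "a \<noteq> b" using \<open>e \<noteq> f\<close> a(3) b(3) by blast
    show "convex hull (pos ` e) \<inter> convex hull (pos ` f) \<subseteq> pos ` (e \<inter> f)"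
      unfolding a(3) b(3) hull by (rule edge_edge[OF a(1,2) b(1,2) \<open>a \<noteq> b\<close>])
  qed
  have c4: "\<forall>v\<in>V. \<forall>u\<in>nbrs E v. \<forall>x\<in>nbrs E v. x \<noteq> u \<longrightarrow>
        Arg2pi ((pos (\<sigma> v u) - pos v) / (pos u - pos v)) \<le> Arg2pi ((pos x - pos v) / (pos u - pos v))"
  proof (intro ballI impI)
    fix v u x assume "v \<in> V" "u \<in> nbrs E v" "x \<in> nbrs E v" "x \<noteq> u"
    thus "Arg2pi ((pos (\<sigma> v u) - pos v) / (pos u - pos v)) \<le> Arg2pi ((pos x - pos v) / (pos u - pos v))"
      by (rule rotation_ok)
  qed
  show "straight_line_drawing V E \<sigma> pos"
    unfolding straight_line_drawing_def using inj_pos c2 c3 c4 by (intro conjI)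
qed

end


theorem corollary3:
  shows "\<exists>c::real > 0. \<forall>(V::nat set) E \<sigma>.
     ordered_tree V E \<sigma> \<and> max_degree V E \<ge> 1 \<longrightarrow>
     (\<exists>p \<alpha>. arc_diagram_drawing V E p \<alpha> \<and> straight_line_drawing V E \<sigma> p \<and>
        angular_resolution_ge V E p \<alpha> (c / sqrt (real (max_degree V E))))"
proof (intro exI[of _ "pi / 8"] conjI allI impI)
  show "0 < pi / 8" by simp
  fix V :: "nat set" and E \<sigma>
  assume H: "ordered_tree V E \<sigma> \<and> max_degree V E \<ge> 1"
  define d where "d = max_degree V E"
  have d1: "1 \<le> d" using H d_def by simp
  have tr: "is_tree V E" using H unfolding ordered_tree_def by simp
  have finV: "finite V" and Vne: "V \<noteq> {}" using tr unfolding is_tree_def by simp_all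
  obtain r where rV: "r \<in> V" using Vne by blast
  define k where "k = nat \<lceil>sqrt (real d)\<rceil>"
  have sd1: "1 \<le> sqrt (real d)" using d1 by simp
  have rk: "real k = of_int \<lceil>sqrt (real d)\<rceil>" unfolding k_def using sd1 by simp
  have k_ge: "sqrt (real d) \<le> real k" unfolding rk by simp
  have k_le: "real k \<le> 2 * sqrt (real d)" unfolding rk using sd1
    using ceiling_correct[of "sqrt (real d)"] by linarith
  have "1 \<le> real k" using k_ge sd1 by linarith
  hence k1: "1 \<le> k" by simp
  have dk: "d \<le> k^2"
  proof -
    have "real d = (sqrt (real d))^2" by simp
    also have "\<dots> \<le> (real k)^2" using k_ge sd1 by (intro power_mono) auto
    finally show ?thesis by (metis of_nat_le_iff of_nat_power)
  qed
  have degk: "\<forall>v\<in>V. card (nbrs E v) \<le> k^2"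
  proof
    fix v assume "v \<in> V"
    hence "card (nbrs E v) \<le> d" unfolding d_def max_degree_def using finV by (intro Max_ge) auto
    thus "card (nbrs E v) \<le> k^2" using dk by simp
  qed
  interpret ot: otree V E \<sigma> r k
    by unfold_locales (use H rV k1 degk in auto)
  have res: "angular_resolution_ge V E ot.pos ot.al (pi / 8 / sqrt (real d))"
  proof -
    have le: "pi / 8 / sqrt (real d) \<le> pi / (4 * real k)"
    proof -
      have "4 * real k \<le> 8 * sqrt (real d)" using k_le by simp
      hence "pi / (8 * sqrt (real d)) \<le> pi / (4 * real k)" using k1 sd1
        by (intro divide_left_mono) auto
      thus ?thesis by simp
    qed
    show ?thesis using ot.drawing_ok(3) le unfolding angular_resolution_ge_def by (meson order_trans)
  qed
  show "\<exists>p \<alpha>. arc_diagram_drawing V E p \<alpha> \<and> straight_line_drawing V E \<sigma> p \<and>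
        angular_resolution_ge V E p \<alpha> (pi / 8 / sqrt (real (max_degree V E)))"
    using ot.drawing_ok(1,2) res unfolding d_def by blast
qed


end
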